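(* Let $F$ be an isonemal periodic fabric of order greater than $4$ whose symmetry group contains a quarter-turn symmetry (with or without side reversal), and suppose $F$ is perfectly coloured by thin striping. Then the resulting pattern, regarded as a design, is not the design of an isonemal prefabric that falls apart.
   Context: The plane is divided into unit square cells by a square grid. A prefabric consists of vertical strands (warps, columns of cells) and horizontal strands (wefts, rows of cells), with a specification in every cell of which strand is uppermost when viewed from the obverse. Its design colours a cell dark if the warp is uppermost and pale if the weft is uppermost; any dark/pale colouring of the cells, regarded as a design, determines a prefabric. A prefabric is periodic if invariant under two linearly independent translations; its order is the period of the up/down sequence along a strand. A symmetry is an isometry of the plane preserving the grid and the prefabric, possibly composed with side reversal $\tau$ (reflection in the plane of the prefabric, interchanging which strand is uppermost in every cell). The symmetry group is $G_1$; the prefabric is isonemal if $G_1$ is transitive on the set of all strands. A fabric is a prefabric that does not fall apart, where a prefabric falls apart if some nonempty proper subset $S$ of the strands is uppermost at every crossing of a strand of $S$ with a strand outside $S$. Thin striping colours warps alternately dark and pale and wefts alternately dark and pale (two possible choices); the pattern colours each cell with the colour of the strand uppermost there. The colouring is perfect if every symmetry in $G_1$ maps all dark strands to dark strands and all pale strands to pale strands, or interchanges the two colour classes of strands. *)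

theory Defs
  imports Main
begin

text \<open>Cells of the grid are indexed by pairs (i,j) of integers: i is the column
 (the warp through the cell), j the row (the weft through the cell).
 A prefabric (equivalently its design) is a function D on cells:
 D c = True means dark, i.e. the warp is uppermost at c;
 D c = False means pale, i.e. the weft is uppermost at c.\<close>

type_synonym cell = "int \<times> int"
type_synonym design = "cell \<Rightarrow> bool"

datatype strand = Warp int | Weft int

definition upper :: "design \<Rightarrow> cell \<Rightarrow> strand" where
  "upper D c = (if D c then Warp (fst c) else Weft (snd c))"

definition lower :: "design \<Rightarrow> cell \<Rightarrow> strand" where
  "lower D c = (if D c then Weft (snd c) else Warp (fst c))"

text \<open>Isometries of the plane preserving the grid, possibly composed with side
 reversal tau. Such an isometry acts on cell indices as
 (i,j) |-> (m11 i + m12 j + t1, m21 i + m22 j + t2) with the linear part a signed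
 permutation matrix (one of the 8 elements of the dihedral group of the square)
 and integer translation part; every such map arises from exactly one grid
 preserving isometry.\<close>

record gsym =
  m11 :: int
  m12 :: int
  m21 :: int
  m22 :: int
  t1 :: int
  t2 :: int
  rev :: bool

definition grid_iso :: "gsym \<Rightarrow> bool" where
  "grid_iso g \<longleftrightarrow>
     (m12 g = 0 \<and> m21 g = 0 \<and> \<bar>m11 g\<bar> = 1 \<and> \<bar>m22 g\<bar> = 1) \<or>
     (m11 g = 0 \<and> m22 g = 0 \<and> \<bar>m12 g\<bar> = 1 \<and> \<bar>m21 g\<bar> = 1)"

definition cellmap :: "gsym \<Rightarrow> cell \<Rightarrow> cell" where
  "cellmap g c = (m11 g * fst c + m12 g * snd c + t1 g, m21 g * fst c + m22 g * snd c + t2 g)"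

fun strandmap :: "gsym \<Rightarrow> strand \<Rightarrow> strand" where
  "strandmap g (Warp i) = (if m11 g = 0 then Weft (m21 g * i + t2 g) else Warp (m11 g * i + t1 g))"
| "strandmap g (Weft j) = (if m11 g = 0 then Warp (m12 g * j + t1 g) else Weft (m22 g * j + t2 g))"

text \<open>g is a symmetry of the prefabric D: at every cell c, the strand that is
 uppermost at c (or, if side reversal is involved, the strand that is lowermost,
 i.e. uppermost on the reverse) is mapped to the strand uppermost at the image cell.\<close>
definition is_sym :: "design \<Rightarrow> gsym \<Rightarrow> bool" where
  "is_sym D g \<longleftrightarrow> grid_iso g \<and>
     (\<forall>c. strandmap g (if rev g then lower D c else upper D c) = upper D (cellmap g c))"

definition G1 :: "design \<Rightarrow> gsym set" where
  "G1 D = {g. is_sym D g}"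

definition isonemal :: "design \<Rightarrow> bool" where
  "isonemal D \<longleftrightarrow> (\<forall>s s'. \<exists>g\<in>G1 D. strandmap g s = s')"

text \<open>Quarter turn: rotation by +-90 degrees (linear part of determinant 1 that
 interchanges the axes), with or without side reversal.\<close>
definition quarter_turn :: "gsym \<Rightarrow> bool" where
  "quarter_turn g \<longleftrightarrow> grid_iso g \<and> m11 g = 0 \<and> m22 g = 0 \<and> m12 g * m21 g = -1"

definition periodic :: "design \<Rightarrow> bool" where
  "periodic D \<longleftrightarrow> (\<exists>a b c d :: int. a * d - b * c \<noteq> 0 \<and>
      (\<forall>i j. D (i + a, j + b) = D (i, j)) \<and> (\<forall>i j. D (i + c, j + d) = D (i, j)))"

text \<open>Up/down sequence along a strand (True = strand is up).\<close>
fun updown :: "design \<Rightarrow> strand \<Rightarrow> int \<Rightarrow> bool" where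
  "updown D (Warp i) k = D (i, k)"
| "updown D (Weft j) k = (\<not> D (k, j))"

definition strand_period :: "design \<Rightarrow> strand \<Rightarrow> nat" where
  "strand_period D s = (LEAST p::nat. p > 0 \<and> (\<forall>k. updown D s (k + int p) = updown D s k))"

definition has_order :: "design \<Rightarrow> nat \<Rightarrow> bool" where
  "has_order D n \<longleftrightarrow> (\<forall>s. strand_period D s = n)"

fun is_warp :: "strand \<Rightarrow> bool" where
  "is_warp (Warp _) = True" | "is_warp (Weft _) = False"

definition falls_apart :: "design \<Rightarrow> bool" where
  "falls_apart D \<longleftrightarrow> (\<exists>S :: strand set. S \<noteq> {} \<and> S \<noteq> UNIV \<and>
     (\<forall>i j. (Warp i \<in> S \<and> Weft j \<notin> S \<longrightarrow> D (i, j)) \<and>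
            (Weft j \<in> S \<and> Warp i \<notin> S \<longrightarrow> \<not> D (i, j))))"

definition fabric :: "design \<Rightarrow> bool" where
  "fabric D \<longleftrightarrow> \<not> falls_apart D"

definition thin_striping :: "(strand \<Rightarrow> bool) \<Rightarrow> bool" where
  "thin_striping col \<longleftrightarrow> (\<exists>p q. (\<forall>i. col (Warp i) = (even i \<longleftrightarrow> p)) \<and>
                                  (\<forall>j. col (Weft j) = (even j \<longleftrightarrow> q)))"

definition pattern :: "design \<Rightarrow> (strand \<Rightarrow> bool) \<Rightarrow> design" where
  "pattern D col = (\<lambda>c. col (upper D c))"

definition perfect :: "design \<Rightarrow> (strand \<Rightarrow> bool) \<Rightarrow> bool" where
  "perfect D col \<longleftrightarrow> (\<forall>g\<in>G1 D. (\<forall>s. col (strandmap g s) = col s) \<or>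
                                  (\<forall>s. col (strandmap g s) = (\<not> col s)))"

end

theory Submission
  imports Defs
begin


lemma D_sym:
  assumes "is_sym D k"
  shows "D (cellmap k c) = (D c = (rev k = (m11 k = 0)))"
proof -
  from assms have "strandmap k (if rev k then lower D c else upper D c) = upper D (cellmap k c)"
    unfolding is_sym_def by blast
  then show ?thesis
    by (cases c) (auto simp: upper_def lower_def split: if_splits)
qed

lemma perfect_flip:
  assumes "perfect D col" "k \<in> G1 D"
  obtains E where "\<forall>s. col (strandmap k s) = (col s \<noteq> E)"
proof -
  from assms have "(\<forall>s. col (strandmap k s) = col s) \<or> (\<forall>s. col (strandmap k s) = (\<not> col s))"
    unfolding perfect_def by blast
  then show ?thesis
  proof
    assume "\<forall>s. col (strandmap k s) = col s"
    then show ?thesis using that[of False] by simp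
  next
    assume "\<forall>s. col (strandmap k s) = (\<not> col s)"
    then show ?thesis using that[of True] by simp
  qed
qed

lemma perfect_par:
  assumes "thin_striping col" "\<forall>s. col (strandmap k s) = (col s \<noteq> E)"
  shows "even (t1 k) = even (t2 k)"
proof -
  from assms(1) obtain p q where cw: "\<And>i. col (Warp i) = (even i = p)"
      and cf: "\<And>j. col (Weft j) = (even j = q)"
    unfolding thin_striping_def by blast
  have a: "col (strandmap k (Warp 0)) = (col (Warp 0) \<noteq> E)"
   and b: "col (strandmap k (Weft 0)) = (col (Weft 0) \<noteq> E)" using assms(2) by blast+
  show ?thesis
  proof (cases "m11 k = 0")
    case True
    then have "strandmap k (Warp 0) = Weft (t2 k)" "strandmap k (Weft 0) = Warp (t1 k)" by auto
    then have "(even (t2 k) = q) = (p \<noteq> E)" "(even (t1 k) = p) = (q \<noteq> E)" using a b cw cf by simp_all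
    then show ?thesis by (cases E; cases p; cases q; simp)
  next
    case False
    then have "strandmap k (Warp 0) = Warp (t1 k)" "strandmap k (Weft 0) = Weft (t2 k)" by auto
    then have "(even (t1 k) = p) = (p \<noteq> E)" "(even (t2 k) = q) = (q \<noteq> E)" using a b cw cf by simp_all
    then show ?thesis by (cases E; cases p; cases q; simp)
  qed
qed

lemma trans_mult:
  fixes D :: design
  assumes "\<forall>x y. D (x + a, y + b) = (D (x, y) \<noteq> \<epsilon>)"
  shows "D (x + q*a, y + q*b) = (D (x,y) \<noteq> (\<epsilon> \<and> odd q))"
proof (induct q arbitrary: x y rule: int_induct[where k=0])
  case base then show ?case by simp
next
  case (step1 i)
  have "D (x + (i+1)*a, y + (i+1)*b) = D ((x + i*a) + a, (y + i*b) + b)" by (simp add: algebra_simps)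
  also have "... = (D (x + i*a, y + i*b) \<noteq> \<epsilon>)" using assms by blast
  finally show ?case using step1 by auto
next
  case (step2 i)
  have "D (x + i*a, y + i*b) = D ((x + (i-1)*a) + a, (y + (i-1)*b) + b)" by (simp add: algebra_simps)
  also have "... = (D (x + (i-1)*a, y + (i-1)*b) \<noteq> \<epsilon>)" using assms by blast
  finally show ?case using step2 by auto
qed

lemma per_mult1:
  fixes f :: "int \<Rightarrow> 'a"
  assumes "\<forall>k. f (k + c) = f k"
  shows "f (x + q*c) = f x"
proof (induct q arbitrary: x rule: int_induct[where k=0])
  case base then show ?case by simp
next
  case (step1 i)
  have "f (x + (i+1)*c) = f ((x + i*c) + c)" by (simp add: algebra_simps)
  then show ?case using step1 assms by simp
next
  case (step2 i)
  have "f (x + i*c) = f ((x + (i-1)*c) + c)" by (simp add: algebra_simps)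
  then show ?case using step2 assms by simp
qed

lemma per_mod:
  fixes f :: "int \<Rightarrow> 'a"
  assumes "\<forall>k. f (k + c) = f k"
  shows "f (x mod c) = f x"
proof -
  have "f (x mod c + (x div c) * c) = f (x mod c)" by (rule per_mult1[OF assms])
  moreover have "x mod c + (x div c) * c = x" by simp
  ultimately show ?thesis by simp
qed

lemma per_abs:
  fixes f :: "int \<Rightarrow> 'a"
  assumes "\<forall>k. f (k + L) = f k"
  shows "\<forall>k. f (k + \<bar>L\<bar>) = f k"
proof
  fix k
  show "f (k + \<bar>L\<bar>) = f k"
  proof (cases "L \<ge> 0")
    case True then show ?thesis using assms by simp
  next
    case False
    have "f ((k - L) + L) = f (k - L)" using assms by blast
    then show ?thesis using False by simp
  qed
qed

lemma least_period:
  fixes f :: "int \<Rightarrow> bool"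
  assumes ex: "\<exists>p::nat. p > 0 \<and> (\<forall>k. f (k + int p) = f k)"
    and n: "n = (LEAST p::nat. p > 0 \<and> (\<forall>k. f (k + int p) = f k))"
  shows "n > 0" "\<forall>k. f (k + int n) = f k" "\<And>L. \<forall>k. f (k + L) = f k \<Longrightarrow> int n dvd L"
proof -
  have P: "n > 0 \<and> (\<forall>k. f (k + int n) = f k)" unfolding n using LeastI_ex[OF ex] .
  then show "n > 0" "\<forall>k. f (k + int n) = f k" by auto
  fix L assume L: "\<forall>k. f (k + L) = f k"
  define r where "r = L mod int n"
  have r0: "0 \<le> r" "r < int n" using P unfolding r_def by auto
  have per: "\<forall>k. f (k + r) = f k"
  proof
    fix k
    have "f (k + r + (L div int n) * int n) = f (k + r)" using per_mult1 P by blast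
    moreover have "k + r + (L div int n) * int n = k + L" unfolding r_def by (metis add.assoc mod_div_mult_eq)
    ultimately show "f (k + r) = f k" using L by simp
  qed
  show "int n dvd L"
  proof (rule ccontr)
    assume "\<not> int n dvd L"
    then have "r > 0" using r0 unfolding r_def by (simp add: dvd_eq_mod_eq_0 order_le_less)
    then have "nat r > 0 \<and> (\<forall>k. f (k + int (nat r)) = f k)" using per by simp
    then have "n \<le> nat r" unfolding n by (rule Least_le)
    then show False using r0 by linarith
  qed
qed



lemma trans_rot:
  fixes D :: design
  assumes T: "\<forall>x y. D (x + a, y + b) = (D (x, y) \<noteq> \<epsilon>)"
    and G: "\<forall>i j. D (-e*j + T1, e*i + T2) = D (i, j)"
    and e: "e = 1 \<or> e = -1" and a: "a = 1 \<or> a = -1" and b: "odd b"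
  shows "\<forall>x y. D (x, y + e*(1 + b*b)) = D (x, y)"
proof -
  have ee: "e*e = 1" using e by auto
  have aa: "a*a = 1" using a by auto
  have W: "\<forall>X Y. D (X + (-e*b), Y + e*a) = (D (X, Y) \<noteq> \<epsilon>)"
  proof (intro allI)
    fix X Y
    define i where "i = e*(Y - T2)"
    define j where "j = e*(T1 - X)"
    have X: "X = -e*j + T1" unfolding j_def using ee by (simp add: algebra_simps)
    have Y: "Y = e*i + T2" unfolding i_def using ee by (simp add: algebra_simps)
    have ex1: "X + (-e*b) = -e*(j+b) + T1" using X by (simp add: algebra_simps)
    have ex2: "Y + e*a = e*(i+a) + T2" using Y by (simp add: algebra_simps)
    have "D (X + (-e*b), Y + e*a) = D (-e*(j+b) + T1, e*(i+a) + T2)" by (simp only: ex1 ex2)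
    also have "\<dots> = D (i + a, j + b)" using G by blast
    also have "\<dots> = (D (i, j) \<noteq> \<epsilon>)" using T by blast
    also have "D (i,j) = D (X, Y)" using G X Y by simp
    finally show "D (X + (-e*b), Y + e*a) = (D (X, Y) \<noteq> \<epsilon>)" .
  qed
  show ?thesis
  proof (intro allI)
    fix x y
    have oa: "odd a" using a by auto
    have oeb: "odd (e*b)" using e b by auto
    have 1: "D (x + (e*b)*a, y + (e*b)*b) = (D (x,y) \<noteq> (\<epsilon> \<and> odd (e*b)))"
      by (rule trans_mult[OF T])
    have 2: "D ((x + (e*b)*a) + a*(-e*b), (y + (e*b)*b) + a*(e*a)) = (D (x + (e*b)*a, y + (e*b)*b) \<noteq> (\<epsilon> \<and> odd a))"
      by (rule trans_mult[OF W])
    have 3: "(x + (e*b)*a) + a*(-e*b) = x" by (simp add: algebra_simps)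
    have 4: "(y + (e*b)*b) + a*(e*a) = y + e*(1 + b*b)"
    proof -
      have "(y + (e*b)*b) + a*(e*a) = y + e*(b*b) + e*(a*a)" by (simp add: algebra_simps)
      then show ?thesis using aa by (simp add: algebra_simps)
    qed
    have 5: "D (x, y + e*(1 + b*b)) = ((D (x,y) \<noteq> \<epsilon>) \<noteq> \<epsilon>)" using 1 2 3 4 oa oeb by simp
    show "D (x, y + e*(1 + b*b)) = D (x, y)" using 5 by (cases \<epsilon>) auto
  qed
qed

definition cnt :: "nat \<Rightarrow> (int \<Rightarrow> bool) \<Rightarrow> int" where
  "cnt n Q = (\<Sum>k<n. if Q (int k) then 1 else 0)"

lemma cnt_cong: "(\<And>x. Q x = R x) \<Longrightarrow> cnt n Q = cnt n R"
  unfolding cnt_def by simp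

lemma cnt_not: "cnt n (\<lambda>k. \<not> Q k) = int n - cnt n Q"
proof -
  have "cnt n (\<lambda>k. \<not> Q k) = (\<Sum>k<n. 1 - (if Q (int k) then 1 else 0::int))"
    unfolding cnt_def by (intro sum.cong) auto
  also have "\<dots> = int n - cnt n Q" unfolding cnt_def by (simp add: sum_subtractf)
  finally show ?thesis .
qed

lemma cnt_even: "cnt (2*m) (\<lambda>k. even k) = int m \<and> cnt (2*m) (\<lambda>k. odd k) = int m"
proof (induct m)
  case 0 then show ?case by (simp add: cnt_def)
next
  case (Suc m)
  have e: "2 * Suc m = Suc (Suc (2*m))" by simp
  show ?case using Suc unfolding cnt_def e by simp
qed

lemma cnt_bij:
  assumes s: "\<bar>\<sigma>\<bar> = 1" and n: "0 < n" and per: "\<forall>x. Q (x + int n) = Q x"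
  shows "cnt n (\<lambda>k. Q (\<sigma>*k + \<tau>)) = cnt n Q"
proof -
  define f where "f k = nat ((\<sigma> * int k + \<tau>) mod int n)" for k
  have fr: "f k < n" for k unfolding f_def using n
    by (simp add: nat_less_iff)
  have inj: "inj_on f {..<n}"
  proof (rule inj_onI)
    fix x y assume x: "x \<in> {..<n}" and y: "y \<in> {..<n}" and fxy: "f x = f y"
    have "(\<sigma> * int x + \<tau>) mod int n = (\<sigma> * int y + \<tau>) mod int n"
      using fxy n unfolding f_def by (simp add: eq_nat_nat_iff)
    then have "int n dvd (\<sigma> * int x + \<tau>) - (\<sigma> * int y + \<tau>)"
      by (simp add: mod_eq_dvd_iff)
    then have "int n dvd \<sigma> * (int x - int y)" by (simp add: algebra_simps)
    moreover have "\<sigma> = 1 \<or> \<sigma> = -1" using s by auto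
    ultimately have d: "int n dvd (int x - int y)" by (auto simp: dvd_diff_commute)
    have "int x mod int n = int y mod int n" using d by (simp add: mod_eq_dvd_iff)
    then show "x = y" using x y by simp
  qed
  have img: "f ` {..<n} = {..<n}"
    by (rule endo_inj_surj) (use fr inj in auto)
  have bij: "bij_betw f {..<n} {..<n}" using inj img by (simp add: bij_betw_def)
  have pm: "Q (x mod int n) = Q x" for x using per_mod per by blast
  have "cnt n Q = (\<Sum>k<n. if Q (int (f k)) then 1 else 0)"
    unfolding cnt_def using sum.reindex_bij_betw[OF bij, of "\<lambda>k. if Q (int k) then 1 else (0::int)"] by simp
  also have "\<dots> = cnt n (\<lambda>k. Q (\<sigma>*k + \<tau>))"
    unfolding cnt_def f_def using n pm by (intro sum.cong) auto
  finally show ?thesis by simp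
qed



lemma odd_sq4: "odd (b::int) \<Longrightarrow> \<not> (4::int) dvd (1 + b*b)"
proof
  assume "odd b" "4 dvd (1 + b*b)"
  then obtain c where "b = 2*c + 1" by (metis oddE)
  then have "1 + b*b = 4*(c*c + c) + 2" by (simp add: algebra_simps)
  with \<open>4 dvd (1 + b*b)\<close> show False by presburger
qed

lemma pw: "(if (if d then c0 else r) then 1 else 0) + (if (if d then r else c0) then 1 else 0)
   = 2 * (if r = c0 \<and> (if d then c0 else r) then 1 else 0) + (if r \<noteq> c0 then 1 else (0::int))"
  by (cases d; cases r; cases c0) simp_all

lemma odd_sq4e:
  assumes "odd (b::int)" "e = 1 \<or> e = -1"
  shows "\<not> (4::int) dvd e*(1 + b*b)"
proof -
  have "e*(1 + b*b) = 1 + b*b \<or> e*(1 + b*b) = -(1 + b*b)" using assms(2) by auto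
  then show ?thesis using odd_sq4[OF assms(1)] by (metis dvd_minus_iff)
qed

theorem theorem3p3:
  fixes D :: design and col :: "strand \<Rightarrow> bool" and n :: nat
  assumes "fabric D" and "isonemal D" and "periodic D"
    and "has_order D n" and "n > 4"
    and "\<exists>g\<in>G1 D. quarter_turn g"
    and "thin_striping col" and "perfect D col"
  shows "\<not> (isonemal (pattern D col) \<and> falls_apart (pattern D col))"
proof
  assume PP: "isonemal (pattern D col) \<and> falls_apart (pattern D col)"
  then have isoP: "isonemal (pattern D col)" by simp
  from assms(7) obtain p q where cw: "\<And>i. col (Warp i) = (even i = p)"
      and cf: "\<And>j. col (Weft j) = (even j = q)"
    unfolding thin_striping_def by blast
  from assms(3) obtain a b c d where det: "a*d - b*c \<noteq> 0"
      and pa: "\<forall>i j. D (i + a, j + b) = D (i, j)" and pc: "\<forall>i j. D (i + c, j + d) = D (i, j)"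
    unfolding periodic_def by blast
  have pa': "\<forall>x y. D (x + a, y + b) = (D (x,y) \<noteq> False)" using pa by simp
  have pc': "\<forall>x y. D (x + c, y + d) = (D (x,y) \<noteq> False)" using pc by simp
  have Vp: "\<forall>i j. D (i, j + (a*d - b*c)) = D (i, j)"
  proof (intro allI)
    fix i j
    have 1: "D (i + a*c, j + a*d) = D (i, j)" using trans_mult[OF pc', of i a j] by simp
    have 2: "D ((i + a*c) + (-c)*a, (j + a*d) + (-c)*b) = D (i + a*c, j + a*d)"
      using trans_mult[OF pa', of "i + a*c" "-c" "j + a*d"] by simp
    have 3: "D (i, j + (a*d - b*c)) = D ((i + a*c) + (-c)*a, (j + a*d) + (-c)*b)" by (simp add: algebra_simps)
    show "D (i, j + (a*d - b*c)) = D (i, j)" using 1 2 3 by simp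
  qed
  have Hp: "\<forall>i j. D (i + (a*d - b*c), j) = D (i, j)"
  proof (intro allI)
    fix i j
    have 1: "D (i + d*a, j + d*b) = D (i, j)" using trans_mult[OF pa', of i d j] by simp
    have 2: "D ((i + d*a) + (-b)*c, (j + d*b) + (-b)*d) = D (i + d*a, j + d*b)"
      using trans_mult[OF pc', of "i + d*a" "-b" "j + d*b"] by simp
    have 3: "D (i + (a*d - b*c), j) = D ((i + d*a) + (-b)*c, (j + d*b) + (-b)*d)" by (simp add: algebra_simps)
    show "D (i + (a*d - b*c), j) = D (i, j)" using 1 2 3 by simp
  qed
  have exs: "\<exists>p::nat. p > 0 \<and> (\<forall>k. updown D s (k + int p) = updown D s k)" for s
  proof (cases s)
    case (Warp i)
    have "\<forall>k. (\<lambda>k. D (i,k)) (k + (a*d - b*c)) = (\<lambda>k. D (i,k)) k" using Vp by simp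
    then have "\<forall>k. (\<lambda>k. D (i,k)) (k + \<bar>a*d - b*c\<bar>) = (\<lambda>k. D (i,k)) k" by (rule per_abs)
    then show ?thesis using det Warp by (intro exI[of _ "nat \<bar>a*d - b*c\<bar>"]) auto
  next
    case (Weft j)
    have "\<forall>k. (\<lambda>k. D (k,j)) (k + (a*d - b*c)) = (\<lambda>k. D (k,j)) k" using Hp by simp
    then have "\<forall>k. (\<lambda>k. D (k,j)) (k + \<bar>a*d - b*c\<bar>) = (\<lambda>k. D (k,j)) k" by (rule per_abs)
    then show ?thesis using det Weft by (intro exI[of _ "nat \<bar>a*d - b*c\<bar>"]) auto
  qed
  have nn: "n = (LEAST p::nat. p > 0 \<and> (\<forall>k. updown D s (k + int p) = updown D s k))" for s
    using assms(4) unfolding has_order_def strand_period_def by metis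
  have lp1: "\<forall>k. updown D s (k + int n) = updown D s k" for s
    using least_period(2)[OF exs nn] .
  have lp2: "\<forall>k. updown D s (k + L) = updown D s k \<Longrightarrow> int n dvd L" for s L
    using least_period(3)[OF exs nn] by blast
  have npos: "n > 0" using assms(5) by simp
  have nW: "\<And>i k. D (i, k + int n) = D (i, k)" using lp1[of "Warp i" for i] by simp
  have nF: "\<And>k j. D (k + int n, j) = D (k, j)" using lp1[of "Weft j" for j] by simp
  have dvdW: "\<And>L. \<forall>k. D (0, k + L) = D (0, k) \<Longrightarrow> int n dvd L" using lp2[of "Warp 0"] by simp
  have dvdF: "\<And>L. \<forall>k. D (k + L, 0) = D (k, 0) \<Longrightarrow> int n dvd L" using lp2[of "Weft 0"] by simp
  define tr :: gsym where "tr = \<lparr>m11 = 1, m12 = 0, m21 = 0, m22 = 1, t1 = int n, t2 = 0, rev = False\<rparr>"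
  have trs: "is_sym D tr"
    unfolding is_sym_def
  proof
    show "grid_iso tr" by (simp add: tr_def grid_iso_def)
    show "\<forall>c. strandmap tr (if rev tr then lower D c else upper D c) = upper D (cellmap tr c)"
    proof
      fix c :: cell
      obtain i j where c: "c = (i, j)" by (cases c)
      show "strandmap tr (if rev tr then lower D c else upper D c) = upper D (cellmap tr c)"
        using nF[of i j] by (simp add: c tr_def cellmap_def upper_def add.commute)
    qed
  qed
  then have trG: "tr \<in> G1 D" by (simp add: G1_def)
  obtain Etr where "\<forall>s. col (strandmap tr s) = (col s \<noteq> Etr)" using perfect_flip[OF assms(8) trG] by blast
  from perfect_par[OF assms(7) this] have "even (int n)" by (simp add: tr_def)
  then have evn: "even n" by simp
  from assms(6) obtain g where gG: "g \<in> G1 D" and gq: "quarter_turn g" by blast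
  have gs: "is_sym D g" using gG by (simp add: G1_def)
  have g0: "m11 g = 0" "m22 g = 0" "m12 g * m21 g = -1" using gq by (auto simp: quarter_turn_def)
  define e where "e = m21 g"
  have e1: "e = 1 \<or> e = -1" and m12e: "m12 g = -e"
    using g0(3) unfolding e_def zmult_eq_neg1_iff by auto
  have ee: "e*e = 1" using e1 by auto
  obtain Eg where Eg: "\<forall>s. col (strandmap g s) = (col s \<noteq> Eg)" using perfect_flip[OF assms(8) gG] by blast
  have gpar: "even (t1 g) = even (t2 g)" by (rule perfect_par[OF assms(7) Eg])
  define T1 where "T1 = t1 g"
  define T2 where "T2 = t2 g"
  have gcell: "\<And>i j. cellmap g (i,j) = (-e*j + T1, e*i + T2)"
    by (simp add: cellmap_def g0 m12e e_def T1_def T2_def)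
  define j0 where "j0 = (e*T1 + T2) div 2"
  define i0 where "i0 = -e*j0 + T1"
  have evs: "even (e*T1 + T2)" using e1 gpar unfolding T1_def T2_def by auto
  have j02: "2*j0 = e*T1 + T2" unfolding j0_def using evs by simp
  have j0e: "e*i0 + T2 = j0"
  proof -
    have "e*i0 + T2 = -(e*e)*j0 + e*T1 + T2" unfolding i0_def by (simp add: algebra_simps)
    also have "\<dots> = j0" using ee j02 by simp
    finally show ?thesis .
  qed
  have fixg: "cellmap g (i0,j0) = (i0,j0)" using gcell j0e i0_def by simp
  have revg: "rev g"
  proof -
    have "D (i0,j0) = (D (i0,j0) = (rev g = (m11 g = 0)))" using D_sym[OF gs, of "(i0,j0)"] fixg by simp
    then show ?thesis using g0 by (cases "rev g") auto
  qed
  have gD: "\<And>i j. D (-e*j + T1, e*i + T2) = D (i, j)"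
    using D_sym[OF gs] revg g0 gcell by metis
  have i02: "2*i0 = T1 - e*T2"
  proof -
    have "2*i0 = -e*(2*j0) + 2*T1" unfolding i0_def by (simp add: algebra_simps)
    also have "\<dots> = -(e*e)*T1 - e*T2 + 2*T1" using j02 by (simp add: algebra_simps)
    also have "\<dots> = T1 - e*T2" using ee by simp
    finally show ?thesis .
  qed
  have g2: "\<And>x y. D (2*i0 - x, 2*j0 - y) = D (x, y)"
  proof -
    fix x y
    have a1: "-e*(e*x + T2) + T1 = 2*i0 - x" using i02 e1 by (cases "e = 1") (simp_all add: algebra_simps)
    have a2: "e*(-e*y + T1) + T2 = 2*j0 - y" using j02 e1 by (cases "e = 1") (simp_all add: algebra_simps)
    have "D (2*i0 - x, 2*j0 - y) = D (-e*(e*x + T2) + T1, e*(-e*y + T1) + T2)" using a1 a2 by simp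
    also have "\<dots> = D (-e*y + T1, e*x + T2)" by (rule gD)
    also have "\<dots> = D (x, y)" by (rule gD)
    finally show "D (2*i0 - x, 2*j0 - y) = D (x, y)" .
  qed
  have no4: "\<not> (4::int) dvd int n"
  proof
    assume 4: "(4::int) dvd int n"
    have contraV: "False" if "L \<noteq> 0" "\<not> 4 dvd L" "\<forall>i j. D (i, j + L) = D (i,j)" for L
    proof -
      have "int n dvd L" using dvdW that(3) by blast
      then show False using 4 that(2) dvd_trans by blast
    qed
    from assms(2) obtain k where kG: "k \<in> G1 D" and kw: "strandmap k (Warp i0) = Warp (i0+1)"
      unfolding isonemal_def by blast
    have ks: "is_sym D k" using kG by (simp add: G1_def)
    have k11: "m11 k \<noteq> 0" using kw by (auto split: if_splits)
    have kiso: "m12 k = 0" "m21 k = 0" "\<bar>m11 k\<bar> = 1" "\<bar>m22 k\<bar> = 1"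
      using ks k11 unfolding is_sym_def grid_iso_def by auto
    have kt1: "m11 k * i0 + t1 k = i0 + 1" using kw k11 by simp
    obtain Ek where Ek: "\<forall>s. col (strandmap k s) = (col s \<noteq> Ek)" using perfect_flip[OF assms(8) kG] by blast
    have kpar: "even (t1 k) = even (t2 k)" by (rule perfect_par[OF assms(7) Ek])
    have kD: "\<And>i j. D (m11 k * i + t1 k, m22 k * j + t2 k) = (D (i,j) \<noteq> rev k)"
    proof -
      fix i j
      have "cellmap k (i,j) = (m11 k * i + t1 k, m22 k * j + t2 k)" by (simp add: cellmap_def kiso)
      then show "D (m11 k * i + t1 k, m22 k * j + t2 k) = (D (i,j) \<noteq> rev k)"
        using D_sym[OF ks, of "(i,j)"] k11 by auto
    qed
    have m11c: "m11 k = 1 \<or> m11 k = -1" and m22c: "m22 k = 1 \<or> m22 k = -1" using kiso by auto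
    show False
    proof (cases "m11 k = 1")
      case A1: True
      have t1k: "t1 k = 1" using kt1 A1 by simp
      have ot2: "odd (t2 k)" using kpar t1k by simp
      show False
      proof (cases "m22 k = 1")
        case True
        have T: "\<forall>x y. D (x + 1, y + t2 k) = (D (x, y) \<noteq> rev k)"
          using kD A1 True t1k by (simp add: add.commute)
        have "\<forall>x y. D (x, y + e*(1 + t2 k * t2 k)) = D (x, y)"
          by (rule trans_rot[OF T _ e1 _ ot2]) (use gD in auto)
        moreover have "e*(1 + t2 k * t2 k) \<noteq> 0" using e1
          by (auto simp: add_eq_0_iff2) (smt (verit) zero_le_square)+
        moreover have "\<not> 4 dvd e*(1 + t2 k * t2 k)" by (rule odd_sq4e[OF ot2 e1])
        ultimately show False using contraV by blast
      next
        case False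
        then have m22: "m22 k = -1" using m22c by simp
        have T: "\<And>x y. D (x + 1, - y + t2 k) = (D (x, y) \<noteq> rev k)"
          using kD A1 m22 t1k by (simp add: add.commute)
        have "\<forall>x. D (x + 2, 0) = D (x, 0)"
        proof
          fix x
          have "D ((x + 1) + 1, - (- 0 + t2 k) + t2 k) = (D (x + 1, - 0 + t2 k) \<noteq> rev k)" by (rule T)
          also have "\<dots> = D (x, 0)" using T[of x 0] by (cases "rev k") auto
          finally show "D (x + 2, 0) = D (x, 0)" by (simp add: add.assoc)
        qed
        then have "int n dvd 2" using dvdF by blast
        then have "n dvd 2" by (metis int_dvd_int_iff of_nat_numeral)
        then have "n \<le> 2" by (rule dvd_imp_le) simp
        then show False using assms(5) by simp
      qed
    next
      case False
      then have A1: "m11 k = -1" using m11c by simp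
      have t1k: "t1 k = 2*i0 + 1" using kt1 A1 by simp
      have ot2: "odd (t2 k)" using kpar t1k by simp
      show False
      proof (cases "m22 k = 1")
        case True
        have T: "\<And>x y. D (- x + t1 k, y + t2 k) = (D (x, y) \<noteq> rev k)"
          using kD A1 True by simp
        have "\<forall>i j. D (i, j + 2 * t2 k) = D (i, j)"
        proof (intro allI)
          fix i j
          have "D (- (- i + t1 k) + t1 k, (j + t2 k) + t2 k) = (D (- i + t1 k, j + t2 k) \<noteq> rev k)" by (rule T)
          also have "\<dots> = D (i, j)" using T[of i j] by (cases "rev k") auto
          finally show "D (i, j + 2 * t2 k) = D (i, j)" by (simp add: algebra_simps)
        qed
        moreover have "2 * t2 k \<noteq> 0" using ot2 by auto
        moreover have "\<not> (4::int) dvd 2 * t2 k" using ot2 by presburger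
        ultimately show False using contraV by blast
      next
        case False
        then have m22: "m22 k = -1" using m22c by simp
        have T0: "\<And>x y. D (- x + t1 k, - y + t2 k) = (D (x, y) \<noteq> rev k)"
          using kD A1 m22 by simp
        have T: "\<forall>x y. D (x + -1, y + (2*j0 - t2 k)) = (D (x, y) \<noteq> rev k)"
        proof (intro allI)
          fix x y
          have "D (x + -1, y + (2*j0 - t2 k)) = D (2*i0 - (- x + t1 k), 2*j0 - (- y + t2 k))"
            using t1k by (simp add: algebra_simps)
          also have "\<dots> = D (- x + t1 k, - y + t2 k)" by (rule g2)
          also have "\<dots> = (D (x, y) \<noteq> rev k)" by (rule T0)
          finally show "D (x + -1, y + (2*j0 - t2 k)) = (D (x, y) \<noteq> rev k)" .
        qed
        have ob: "odd (2*j0 - t2 k)" using ot2 by simp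
        have "\<forall>x y. D (x, y + e*(1 + (2*j0 - t2 k) * (2*j0 - t2 k))) = D (x, y)"
          by (rule trans_rot[OF T _ e1 _ ob]) (use gD in auto)
        moreover have "e*(1 + (2*j0 - t2 k) * (2*j0 - t2 k)) \<noteq> 0" using e1
          by (auto simp: add_eq_0_iff2) (smt (verit) zero_le_square)+
        moreover have "\<not> 4 dvd e*(1 + (2*j0 - t2 k) * (2*j0 - t2 k))" by (rule odd_sq4e[OF ob e1])
        ultimately show False using contraV by blast
      qed
    qed
  qed
  from evn obtain m where nm: "n = 2*m" by (metis evenE)
  have oddm: "odd m" using no4 nm by (auto simp: dvd_def) presburger?
  have mpos: "0 < n" using npos .
  define Pat where "Pat = pattern D col"
  have Pdef: "\<And>i j. Pat (i,j) = (if D (i,j) then col (Warp i) else col (Weft j))"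
    by (simp add: Pat_def pattern_def upper_def)
  from isoP obtain h where hG: "h \<in> G1 Pat" and hw: "strandmap h (Warp i0) = Weft j0"
    unfolding isonemal_def Pat_def by blast
  have hs: "is_sym Pat h" using hG by (simp add: G1_def)
  have h11: "m11 h = 0" using hw by (auto split: if_splits)
  have hiso: "m22 h = 0" "\<bar>m12 h\<bar> = 1" using hs h11 unfolding is_sym_def grid_iso_def by auto
  have hj: "m21 h * i0 + t2 h = j0" using hw h11 by simp
  have hP: "\<And>k. Pat (m12 h * k + t1 h, j0) = (Pat (i0,k) = rev h)"
  proof -
    fix k
    have "cellmap h (i0,k) = (m12 h * k + t1 h, j0)" using hj h11 hiso by (simp add: cellmap_def)
    then show "Pat (m12 h * k + t1 h, j0) = (Pat (i0,k) = rev h)"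
      using D_sym[OF hs, of "(i0,k)"] h11 by simp
  qed
  have Pper: "\<forall>x. Pat (x + int n, j0) = Pat (x, j0)"
  proof
    fix x
    have "col (Warp (x + int n)) = col (Warp x)" using cw evn by simp
    then show "Pat (x + int n, j0) = Pat (x, j0)" using nF[of x j0] by (simp add: Pdef)
  qed
  have gP: "\<And>k. Pat (-e*k + T1, j0) = ((if D (i0,k) then col (Weft k) else col (Warp i0)) \<noteq> Eg)"
  proof -
    fix k
    have 1: "D (-e*k + T1, j0) = D (i0, k)" using gD[of k i0] j0e by simp
    have "strandmap g (Weft k) = Warp (-e*k + T1)" using g0 m12e T1_def by simp
    then have 2: "col (Warp (-e*k + T1)) = (col (Weft k) \<noteq> Eg)" using Eg by metis
    have "strandmap g (Warp i0) = Weft j0" using g0 e_def T2_def j0e by simp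
    then have 3: "col (Weft j0) = (col (Warp i0) \<noteq> Eg)" using Eg by metis
    show "Pat (-e*k + T1, j0) = ((if D (i0,k) then col (Weft k) else col (Warp i0)) \<noteq> Eg)"
      using 1 2 3 by (simp add: Pdef)
  qed
  define A where "A = cnt n (\<lambda>k. Pat (i0, k))"
  define A' where "A' = cnt n (\<lambda>k. if D (i0,k) then col (Weft k) else col (Warp i0))"
  have B1: "cnt n (\<lambda>k. Pat (m12 h * k + t1 h, j0)) = cnt n (\<lambda>x. Pat (x, j0))"
    using cnt_bij[OF hiso(2) npos, of "\<lambda>x. Pat (x, j0)"] Pper by simp
  have B2: "cnt n (\<lambda>k. Pat (-e * k + T1, j0)) = cnt n (\<lambda>x. Pat (x, j0))"
  proof -
    have "\<bar>-e\<bar> = 1" using e1 by auto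
    then show ?thesis using cnt_bij[of "-e" n "\<lambda>x. Pat (x, j0)"] npos Pper by simp
  qed
  have B3: "cnt n (\<lambda>k. Pat (m12 h * k + t1 h, j0)) = (if rev h then A else int n - A)"
  proof (cases "rev h")
    case True
    then have "cnt n (\<lambda>k. Pat (m12 h * k + t1 h, j0)) = cnt n (\<lambda>k. Pat (i0, k))"
      using hP by (intro cnt_cong) simp
    then show ?thesis unfolding A_def using True by simp
  next
    case False
    then have "cnt n (\<lambda>k. Pat (m12 h * k + t1 h, j0)) = cnt n (\<lambda>k. \<not> Pat (i0, k))"
      using hP by (intro cnt_cong) simp
    then show ?thesis unfolding A_def using False cnt_not by simp
  qed
  have B4: "cnt n (\<lambda>k. Pat (-e * k + T1, j0)) = (if Eg then int n - A' else A')"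
  proof (cases Eg)
    case False
    then have "cnt n (\<lambda>k. Pat (-e * k + T1, j0)) = cnt n (\<lambda>k. (if D (i0,k) then col (Weft k) else col (Warp i0)))"
      using gP by (intro cnt_cong) simp
    then show ?thesis unfolding A'_def using False by simp
  next
    case True
    then have "cnt n (\<lambda>k. Pat (-e * k + T1, j0)) = cnt n (\<lambda>k. \<not> (if D (i0,k) then col (Weft k) else col (Warp i0)))"
      using gP by (intro cnt_cong) simp
    then show ?thesis unfolding A'_def using True cnt_not by simp
  qed
  have SUM: "A + A' = 2 * cnt n (\<lambda>k. col (Weft k) = col (Warp i0) \<and> Pat (i0,k))
                 + cnt n (\<lambda>k. col (Weft k) \<noteq> col (Warp i0))"
  proof -
    have "A + A' = (\<Sum>k<n. (if Pat (i0, int k) then 1 else 0)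
        + (if (if D (i0, int k) then col (Weft (int k)) else col (Warp i0)) then 1 else (0::int)))"
      unfolding A_def A'_def cnt_def by (simp add: sum.distrib)
    also have "\<dots> = (\<Sum>k<n. 2 * (if col (Weft (int k)) = col (Warp i0) \<and> Pat (i0, int k) then 1 else 0)
        + (if col (Weft (int k)) \<noteq> col (Warp i0) then 1 else (0::int)))"
      by (intro sum.cong refl, unfold Pdef, rule pw)
    also have "\<dots> = 2 * cnt n (\<lambda>k. col (Weft k) = col (Warp i0) \<and> Pat (i0,k))
                 + cnt n (\<lambda>k. col (Weft k) \<noteq> col (Warp i0))"
      unfolding cnt_def by (simp add: sum.distrib sum_distrib_left)
    finally show ?thesis .
  qed
  have R: "cnt n (\<lambda>k. col (Weft k) \<noteq> col (Warp i0)) = int m"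
  proof (cases "q = col (Warp i0)")
    case True
    then have "cnt n (\<lambda>k. col (Weft k) \<noteq> col (Warp i0)) = cnt (2*m) (\<lambda>k. odd k)"
      unfolding nm by (intro cnt_cong) (auto simp: cf)
    then show ?thesis using cnt_even by simp
  next
    case False
    then have "cnt n (\<lambda>k. col (Weft k) \<noteq> col (Warp i0)) = cnt (2*m) (\<lambda>k. even k)"
      unfolding nm by (intro cnt_cong) (auto simp: cf)
    then show ?thesis using cnt_even by simp
  qed
  have EQ: "(if rev h then A else int n - A) = (if Eg then int n - A' else A')"
    using B1 B2 B3 B4 by simp
  obtain t where mt: "m = 2*t + 1" using oddm by (metis oddE)
  show False
    using EQ SUM R nm mt by (cases "rev h"; cases Eg; simp; presburger)
qed
end
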